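(* Let $d\ge2$. Every $\sigma_d$-rotational set $A\subset\mathbb{T}$ is a union of at most $d-1$ distinct $\sigma_d$-orbits.
   Context: $\mathbb{T}=\mathbb{R}/\mathbb{Z}$, ordered by representatives in $[0,1)$; $\sigma_d(t)=dt$. A finite set $A=\{t_0<\dots<t_{N-1}\}\subset\mathbb{T}$ (indices in $\mathbb{Z}/N\mathbb{Z}$) is $\sigma_d$-rotational if for some fixed $0\ne P\in\mathbb{Z}/N\mathbb{Z}$, $\sigma_d(t_i)=t_{i+P}$ for all $i$. *)

theory Defs
  imports "HOL-Analysis.Analysis"
begin

text \<open>The circle T = R/Z is represented by representatives in [0,1), ordered as reals.\<close>

definition sigma :: "nat \<Rightarrow> real \<Rightarrow> real" where
  "sigma d t = frac (real d * t)"

definition rotational :: "nat \<Rightarrow> real set \<Rightarrow> bool" where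
  "rotational d A \<longleftrightarrow> finite A \<and> A \<subseteq> {0..<1} \<and>
     (let N = card A; t = (\<lambda>i. sorted_list_of_set A ! i) in
      \<exists>P::nat. P mod N \<noteq> 0 \<and> (\<forall>i<N. sigma d (t i) = t ((i + P) mod N)))"

definition orbit :: "nat \<Rightarrow> real \<Rightarrow> real set" where
  "orbit d t = {(sigma d ^^ n) t | n. True}"

end

theory Submission
  imports Defs
begin

lemma modcancel: "(i + c) mod N = (j + c) mod (N::nat) \<Longrightarrow> i mod N = j mod N"
  using nat_mod_eq_iff by fastforce

lemma bij_shift: "0 < N \<Longrightarrow> bij_betw (\<lambda>i. (i + c) mod N) {..<(N::nat)} {..<N}"
proof -
  assume N: "0 < N"
  have "inj_on (\<lambda>i. (i + c) mod N) {..<N}"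
  proof
    fix i j assume i: "i \<in> {..<N}" and j: "j \<in> {..<N}" and e: "(i + c) mod N = (j + c) mod N"
    have "i mod N = j mod N" using e by (rule modcancel)
    thus "i = j" using i j by (metis lessThan_iff mod_less)
  qed
  moreover have "(\<lambda>i. (i + c) mod N) ` {..<N} \<subseteq> {..<N}" using N by auto
  ultimately show ?thesis
    by (simp add: bij_betw_def endo_inj_surj)
qed

theorem corollary3p5:
  fixes d :: nat and A :: "real set"
  assumes "d \<ge> 2" and "rotational d A"
  shows "A = \<Union> (orbit d ` A) \<and> card (orbit d ` A) \<le> d - 1"
proof -
  from assms(2) have fin: "finite A" and sub: "A \<subseteq> {0..<1}" and
    ex: "\<exists>P::nat. P mod card A \<noteq> 0 \<and> (\<forall>i<card A. sigma d (sorted_list_of_set A ! i) = sorted_list_of_set A ! ((i+P) mod card A))"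
    unfolding rotational_def Let_def by auto
  define N where "N = card A"
  define t where "t = (\<lambda>i. sorted_list_of_set A ! i)"
  obtain P where P: "P mod N \<noteq> 0" and rot: "\<And>i. i<N \<Longrightarrow> sigma d (t i) = t ((i+P) mod N)"
    using ex unfolding N_def t_def by auto
  have At: "A = t ` {..<N}"
  proof -
    have "A = set (sorted_list_of_set A)" using fin by simp
    also have "\<dots> = t ` {..<N}" unfolding t_def N_def set_conv_nth by auto
    finally show ?thesis .
  qed
  have tA: "\<And>i. i < N \<Longrightarrow> t i \<in> A" using At by auto
  have t01: "\<And>i. i < N \<Longrightarrow> 0 \<le> t i \<and> t i < 1" using tA sub by (meson atLeastLessThan_iff subsetD)
  have tmono: "\<And>i j. i < j \<Longrightarrow> j < N \<Longrightarrow> t i < t j"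
    unfolding t_def N_def
    by (metis length_sorted_list_of_set sorted_wrt_nth_less strict_sorted_list_of_set)
  have iter: "\<And>i n. i<N \<Longrightarrow> (sigma d ^^ n) (t i) = t ((i+n*P) mod N)"
  proof -
    fix i n assume i: "i < N"
    show "(sigma d ^^ n) (t i) = t ((i+n*P) mod N)"
    proof (induction n)
      case 0 thus ?case using i by simp
    next
      case (Suc n)
      have "N > 0" using i by simp
      hence "(i+n*P) mod N < N" by simp
      hence "sigma d (t ((i+n*P) mod N)) = t (((i+n*P) mod N + P) mod N)" by (rule rot)
      also have "((i+n*P) mod N + P) mod N = (i + Suc n * P) mod N"
        unfolding mod_add_left_eq by (simp add: add_ac)
      finally show ?case using Suc by simp
    qed
  qed
  define J where "J = (\<lambda>i. {(i+n*P) mod N | n. True})"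
  have orb: "\<And>i. i<N \<Longrightarrow> orbit d (t i) = t ` J i"
    unfolding orbit_def J_def using iter by auto
  have part1: "A = \<Union> (orbit d ` A)"
  proof
    show "A \<subseteq> \<Union> (orbit d ` A)"
    proof
      fix x assume "x \<in> A"
      moreover have "x \<in> orbit d x" unfolding orbit_def by (auto intro: exI[of _ 0])
      ultimately show "x \<in> \<Union> (orbit d ` A)" by auto
    qed
    show "\<Union> (orbit d ` A) \<subseteq> A"
    proof
      fix x assume "x \<in> \<Union> (orbit d ` A)"
      then obtain i where i: "i < N" and x: "x \<in> orbit d (t i)" using At by auto
      then obtain n where "x = t ((i+n*P) mod N)" using orb unfolding J_def by auto
      moreover have "(i+n*P) mod N < N" using i by simp
      ultimately show "x \<in> A" using tA by simp
    qed
  qed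
  show ?thesis
  proof (cases "N = 0")
    case True
    hence "A = {}" using fin N_def by simp
    thus ?thesis by simp
  next
    case False
    hence N2: "N \<ge> 2" using P by (metis One_nat_def Suc_1 less_2_cases_iff mod_by_1 not_less)
    hence N0: "N > 0" by simp
    define c :: "nat \<Rightarrow> real" where "c = (\<lambda>i. if i = N - 1 then 1 else 0)"
    define l where "l = (\<lambda>i. t ((i+1) mod N) - t i + c i)"
    define k where "k = (\<lambda>i. real d * l i - l ((i+P) mod N))"
    have lpos: "\<And>i. i < N \<Longrightarrow> 0 < l i \<and> l i \<le> 1"
    proof -
      fix i assume i: "i < N"
      show "0 < l i \<and> l i \<le> 1"
      proof (cases "i = N - 1")
        case True
        hence "(i+1) mod N = 0" using N0 by simp
        moreover have "t 0 \<le> t (N-1)" using tmono[of 0 "N-1"] N2 by (cases "N-1 = 0") auto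
        ultimately show ?thesis using t01[of 0] t01[of "N-1"] N0 True unfolding l_def c_def by auto
      next
        case False
        hence "(i+1) mod N = i+1" "i+1 < N" using i by auto
        thus ?thesis using tmono[of i "i+1"] t01[of i] t01[of "i+1"] False unfolding l_def c_def by auto
      qed
    qed
    have kint: "\<And>i. i < N \<Longrightarrow> \<exists>z::int. k i = of_int z"
    proof -
      fix i assume i: "i < N"
      define s where "s = (i+1) mod N"
      define p where "p = (i+P) mod N"
      have s: "s < N" "p < N" using N0 unfolding s_def p_def by auto
      have sp: "(s + P) mod N = (p + 1) mod N" unfolding s_def p_def mod_add_left_eq
        by (simp add: add_ac)
      have e1: "real d * t s = t ((s+P) mod N) + of_int \<lfloor>real d * t s\<rfloor>"
        using rot[OF s(1)] unfolding sigma_def frac_def by simp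
      have e2: "real d * t i = t p + of_int \<lfloor>real d * t i\<rfloor>"
        using rot[OF i] unfolding sigma_def frac_def p_def by simp
      have "k i = real d * t s - real d * t i + real d * c i - (t ((s+P) mod N) - t p + c p)"
        unfolding k_def l_def s_def[symmetric] p_def[symmetric] sp[symmetric] by (simp add: algebra_simps)
      also have "\<dots> = of_int (\<lfloor>real d * t s\<rfloor> - \<lfloor>real d * t i\<rfloor>) + (real d * c i - c p)"
        using e1 e2 by simp
      finally have ki: "k i = of_int (\<lfloor>real d * t s\<rfloor> - \<lfloor>real d * t i\<rfloor>) + (real d * c i - c p)" .
      have "\<exists>z::int. real d * c i - c p = of_int z"
        unfolding c_def by (auto intro: exI[of _ "int d"] exI[of _ "int d - 1"] exI[of _ 0] exI[of _ "-1"])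
      then obtain z where z: "real d * c i - c p = of_int z" by blast
      show "\<exists>z::int. k i = of_int z"
        by (rule exI[of _ "\<lfloor>real d * t s\<rfloor> - \<lfloor>real d * t i\<rfloor> + z"]) (simp add: ki z)
    qed
    have knn: "\<And>i. i < N \<Longrightarrow> k i \<ge> 0"
    proof -
      fix i assume i: "i < N"
      obtain z where z: "k i = of_int z" using kint[OF i] by blast
      have "(i+P) mod N < N" using N0 by simp
      hence l1: "l ((i+P) mod N) \<le> 1" using lpos by blast
      have "real d * l i > 0" using lpos[OF i] assms(1) by simp
      hence "k i > -1" unfolding k_def using l1 by linarith
      hence "z > -1" using z by simp
      thus "k i \<ge> 0" using z by simp
    qed
    have k1: "\<And>i. i < N \<Longrightarrow> k i \<noteq> 0 \<Longrightarrow> k i \<ge> 1"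
    proof -
      fix i assume i: "i < N" and nz: "k i \<noteq> 0"
      obtain z where z: "k i = of_int z" using kint[OF i] by blast
      have "z \<ge> 0" using knn[OF i] z by simp
      moreover have "z \<noteq> 0" using nz z by simp
      ultimately show "k i \<ge> 1" using z by simp
    qed
    have sumshift: "\<And>f c. (\<Sum>i<N. f ((i + c) mod N)) = (\<Sum>i<N. (f i :: real))"
      using sum.reindex_bij_betw[OF bij_shift[OF N0]] by blast
    have csum: "(\<Sum>i<N. c i) = 1"
    proof -
      have "(\<Sum>i<N. c i) = (\<Sum>i\<in>{N-1}. c i)"
        by (rule sum.mono_neutral_right) (auto simp: c_def N0)
      thus ?thesis by (simp add: c_def)
    qed
    have lsum: "(\<Sum>i<N. l i) = 1"
      unfolding l_def using sumshift[of t 1] csum by (simp add: sum.distrib sum_subtractf)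
    have ksum: "(\<Sum>i<N. k i) = real d - 1"
      unfolding k_def using sumshift[of l P] lsum by (simp add: sum_subtractf sum_distrib_left[symmetric])
    define S where "S = {i. i < N \<and> k i \<noteq> 0}"
    have cover: "orbit d ` A \<subseteq> (\<lambda>i. orbit d (t i)) ` S"
    proof
      fix Ob assume "Ob \<in> orbit d ` A"
      then obtain j where j: "j < N" and Ob: "Ob = orbit d (t j)" using At by auto
      have Jsub: "J j \<subseteq> {..<N}" unfolding J_def using N0 by auto
      have Jf: "finite (J j)" by (rule finite_subset[OF Jsub]) simp
      hence Jfin: "finite (l ` J j)" by simp
      have jJ: "j \<in> J j" unfolding J_def using j by (auto intro: exI[of _ 0])
      hence ne: "l ` J j \<noteq> {}" by auto
      have "Max (l ` J j) \<in> l ` J j" using Max_in[OF Jfin ne] .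
      then obtain i where iJ: "i \<in> J j" and imax: "l i = Max (l ` J j)" by auto
      have ile: "\<And>i'. i' \<in> J j \<Longrightarrow> l i' \<le> l i" using imax Jfin by simp
      obtain n where n: "i = (j + n*P) mod N" using iJ unfolding J_def by auto
      have iN: "i < N" using n N0 by simp
      have piJ: "(i+P) mod N \<in> J j"
        unfolding J_def n mod_add_left_eq by (auto simp: add_ac intro!: exI[of _ "Suc n"])
      have "k i \<noteq> 0"
      proof
        assume "k i = 0"
        hence "l ((i+P) mod N) = real d * l i" unfolding k_def by simp
        moreover have "real d * l i > l i" using lpos[OF iN] assms(1) by simp
        ultimately show False using ile[OF piJ] by simp
      qed
      hence iS: "i \<in> S" using iN S_def by simp
      have "J i = J j"
      proof
        show "J i \<subseteq> J j"
        proof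
          fix x assume "x \<in> J i"
          then obtain m where "x = (i + m*P) mod N" unfolding J_def by auto
          hence "x = ((j + n*P) mod N + m*P) mod N" using n by simp
          also have "\<dots> = (j + (n+m)*P) mod N" unfolding mod_add_left_eq by (simp add: algebra_simps)
          finally have "x = (j + (n+m)*P) mod N" .
          thus "x \<in> J j" unfolding J_def by auto
        qed
        show "J j \<subseteq> J i"
        proof
          fix x assume "x \<in> J j"
          then obtain m where m: "x = (j + m*P) mod N" unfolding J_def by auto
          have "(i + (m + n*(N-1))*P) mod N = (j + n*P + (m + n*(N-1))*P) mod N"
            unfolding n mod_add_left_eq by simp
          also have "j + n*P + (m + n*(N-1))*P = (j + m*P) + N * (n*P)"
          proof -
            obtain M where M: "N = Suc M" using N0 not0_implies_Suc by blast
            show ?thesis unfolding M by (simp add: algebra_simps)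
          qed
          also have "(\<dots>) mod N = x" using m by simp
          finally show "x \<in> J i" unfolding J_def by (auto intro!: exI[of _ "m + n*(N-1)"])
        qed
      qed
      hence "Ob = orbit d (t i)" using Ob orb[OF j] orb[OF iN] by simp
      thus "Ob \<in> (\<lambda>i. orbit d (t i)) ` S" using iS by blast
    qed
    have Sfin: "finite S" unfolding S_def by simp
    have "card (orbit d ` A) \<le> card ((\<lambda>i. orbit d (t i)) ` S)"
      by (rule card_mono[OF finite_imageI[OF Sfin] cover])
    also have "\<dots> \<le> card S" by (rule card_image_le[OF Sfin])
    finally have c1: "card (orbit d ` A) \<le> card S" .
    have "real (card S) = (\<Sum>i\<in>S. 1)" by simp
    also have "\<dots> \<le> (\<Sum>i\<in>S. k i)" by (rule sum_mono) (auto simp: S_def k1)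
    also have "\<dots> \<le> (\<Sum>i<N. k i)" by (rule sum_mono2) (auto simp: S_def knn)
    also have "\<dots> = real d - 1" by (rule ksum)
    finally have "real (card S) \<le> real d - 1" .
    hence "card S \<le> d - 1" using assms(1) by linarith
    thus ?thesis using c1 part1 by simp
  qed
qed

end
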